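(* Let $\Omega\subset\mathbb R^d$, $d\in\{2,3\}$, be a bounded polyhedral Lipschitz domain, $V:=H^1_0(\Omega)$ with $\|v\|_V:=(\int_\Omega A_0\nabla v\cdot\nabla v\,dx)^{1/2}$ for a symmetric uniformly positive definite $A_0\in L^\infty$, and $V^*$ with the dual norm. Let $\mathcal U\subset V$ be open, $\mathcal F:V\to V^*$ Fréchet differentiable on $\mathcal U$, $\tilde u_h\in\mathcal U$, $\rho>0$ with $B_\rho:=\{w:\|w-\tilde u_h\|_V\le\rho\}\subset\mathcal U$, and $\mathcal L_w:=D\mathcal F(w)$. Assume: $\|\mathcal F(\tilde u_h)\|_{V^*}\le\mathfrak r$; the bilinear form $B_{\tilde u_h}(\delta u,v):=\langle\mathcal L_{\tilde u_h}\delta u,v\rangle$ is symmetric and satisfies $B_{\tilde u_h}(v,v)\ge\alpha\|v\|_V^2$ for all $v\in V$ with $\alpha>0$; $\|\mathcal L_w-\mathcal L_z\|_{\mathcal L(V,V^* )}\le L(\rho)\|w-z\|_V$ for all $w,z\in B_\rho$; and $u\in B_\rho$ satisfies $\mathcal F(u)=0$. Let $\mathcal J$ be a real functional, Fréchet differentiable on $\mathcal U$, with $\|D\mathcal J(w)-D\mathcal J(z)\|_{\mathcal L(V,\mathbb R)}\le M_{\mathcal J}(\rho)\|w-z\|_V$ for all $w,z\in B_\rho$, where $M_{\mathcal J}(\rho)\ge0$. Set $j_{\tilde u_h}:=D\mathcal J(\tilde u_h)\in V^*$, let $z_h\in V$ be arbitrary, and define $\mathcal G(z_h)\in V^*$ by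 $\langle\mathcal G(z_h),v\rangle:=j_{\tilde u_h}(v)-B_{\tilde u_h}(v,z_h)$. Then $\mathcal J(u)\in[\mathcal J(\tilde u_h)-E_{\mathcal J}(\rho;z_h),\ \mathcal J(\tilde u_h)+E_{\mathcal J}(\rho;z_h)]$, where $$E_{\mathcal J}(\rho;z_h):=|\langle\mathcal F(\tilde u_h),z_h\rangle|+\tfrac12L(\rho)\rho^2\|z_h\|_V+\bigl(\mathfrak r+\tfrac12L(\rho)\rho^2\bigr)\alpha^{-1}\|\mathcal G(z_h)\|_{V^*}+\tfrac12M_{\mathcal J}(\rho)\rho^2.$$
   Context: $\|\cdot\|_{\mathcal L(V,V^* )}$ is the operator norm and $\|\cdot\|_{\mathcal L(V,\mathbb R)}=\|\cdot\|_{V^*}$ the dual norm. In the paper $u$ is the solution whose existence and local uniqueness in $B_\rho$ was certified by a Newton–Kantorovich argument. *)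

theory Defs
  imports "HOL-Analysis.Analysis"
begin

definition G_fun :: "('a::real_normed_vector \<Rightarrow> ('a \<Rightarrow>\<^sub>L ('a \<Rightarrow>\<^sub>L real))) \<Rightarrow>
    ('a \<Rightarrow> ('a \<Rightarrow>\<^sub>L real)) \<Rightarrow> 'a \<Rightarrow> 'a \<Rightarrow> 'a \<Rightarrow> real" where
  "G_fun LF DJ uh zh = (\<lambda>v. DJ uh v - LF uh v zh)"

definition E_J :: "('a::real_normed_vector \<Rightarrow> ('a \<Rightarrow>\<^sub>L real)) \<Rightarrow>
    ('a \<Rightarrow> ('a \<Rightarrow>\<^sub>L ('a \<Rightarrow>\<^sub>L real))) \<Rightarrow> ('a \<Rightarrow> ('a \<Rightarrow>\<^sub>L real)) \<Rightarrow>
    'a \<Rightarrow> 'a \<Rightarrow> real \<Rightarrow> real \<Rightarrow> real \<Rightarrow> real \<Rightarrow> real \<Rightarrow> real" where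
  "E_J F LF DJ uh zh \<rho> r \<alpha> L\<rho> MJ =
     \<bar>F uh zh\<bar> + 1/2 * L\<rho> * \<rho>\<^sup>2 * norm zh
     + (r + 1/2 * L\<rho> * \<rho>\<^sup>2) * inverse \<alpha> * onorm (G_fun LF DJ uh zh)
     + 1/2 * MJ * \<rho>\<^sup>2"

end

theory Submission
  imports Defs
begin

lemma taylor_scalar:
  fixes \<phi> :: "'a::real_normed_vector \<Rightarrow> real" and D :: "'a \<Rightarrow> 'a \<Rightarrow> real"
  assumes der: "\<And>w. w \<in> cball x0 \<rho> \<Longrightarrow> (\<phi> has_derivative D w) (at w)"
    and lip: "\<And>w h. w \<in> cball x0 \<rho> \<Longrightarrow> \<bar>D w h - D x0 h\<bar> \<le> M * norm (w - x0) * norm h"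
    and u: "u \<in> cball x0 \<rho>"
  shows "\<bar>\<phi> u - \<phi> x0 - D x0 (u - x0)\<bar> \<le> M / 2 * (norm (u - x0))\<^sup>2"
proof -
  define e where "e = u - x0"
  define p where "p = (\<lambda>t::real. x0 + t *\<^sub>R e)"
  have pin: "p t \<in> cball x0 \<rho>" if "0 \<le> t" "t \<le> 1" for t
  proof -
    have "dist x0 (p t) = t * norm e" using that by (simp add: p_def dist_norm)
    also have "\<dots> \<le> norm e" using that by (simp add: mult_left_le_one_le)
    also have "\<dots> \<le> \<rho>" using u by (simp add: e_def dist_norm norm_minus_commute)
    finally show ?thesis by simp
  qed
  have dphi: "((\<lambda>t. \<phi> (p t)) has_real_derivative D (p t) e) (at t)" if "0 \<le> t" "t \<le> 1" for t
  proof -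
    have lin: "linear (D (p t))" using der[OF pin[OF that]] has_derivative_linear by blast
    have "(p has_derivative (\<lambda>h. h *\<^sub>R e)) (at t)" unfolding p_def
      by (auto intro!: derivative_eq_intros)
    from has_derivative_compose[OF this der[OF pin[OF that]]]
    have "((\<lambda>t. \<phi> (p t)) has_derivative (\<lambda>h. D (p t) (h *\<^sub>R e))) (at t)" by (simp add: o_def)
    moreover have "(\<lambda>h. D (p t) (h *\<^sub>R e)) = (\<lambda>h. D (p t) e * h)"
      using linear_scale[OF lin] by (auto simp: mult.commute)
    ultimately show ?thesis by (simp add: has_field_derivative_def)
  qed
  have bnd: "\<bar>D (p t) e - D x0 e\<bar> \<le> M * t * (norm e)\<^sup>2" if "0 \<le> t" "t \<le> 1" for t
    using lip[OF pin[OF that], of e] that by (simp add: p_def power2_eq_square mult.assoc)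
  define g1 where "g1 = (\<lambda>t. \<phi> (p t) - t * D x0 e - M / 2 * t\<^sup>2 * (norm e)\<^sup>2)"
  define g2 where "g2 = (\<lambda>t. \<phi> (p t) - t * D x0 e + M / 2 * t\<^sup>2 * (norm e)\<^sup>2)"
  have "g1 1 \<le> g1 0"
  proof (rule DERIV_nonpos_imp_nonincreasing[of 0 1])
    fix t :: real assume t: "0 \<le> t" "t \<le> 1"
    have "(g1 has_real_derivative D (p t) e - D x0 e - M * t * (norm e)\<^sup>2) (at t)"
      unfolding g1_def using dphi[OF t]
      by (auto intro!: derivative_eq_intros)
    then show "\<exists>y. (g1 has_real_derivative y) (at t) \<and> y \<le> 0"
      using bnd[OF t] by (intro exI[of _ "D (p t) e - D x0 e - M * t * (norm e)\<^sup>2"]) auto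
  qed simp
  moreover have "g2 0 \<le> g2 1"
  proof (rule DERIV_nonneg_imp_nondecreasing[of 0 1])
    fix t :: real assume t: "0 \<le> t" "t \<le> 1"
    have "(g2 has_real_derivative D (p t) e - D x0 e + M * t * (norm e)\<^sup>2) (at t)"
      unfolding g2_def using dphi[OF t]
      by (auto intro!: derivative_eq_intros)
    then show "\<exists>y. (g2 has_real_derivative y) (at t) \<and> 0 \<le> y"
      using bnd[OF t] by (intro exI[of _ "D (p t) e - D x0 e + M * t * (norm e)\<^sup>2"]) auto
  qed simp
  ultimately have "\<phi> u - \<phi> x0 - D x0 e \<le> M / 2 * (norm e)\<^sup>2"
    and "-(\<phi> u - \<phi> x0 - D x0 e) \<le> M / 2 * (norm e)\<^sup>2"
    by (simp_all add: g1_def g2_def p_def e_def)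
  then show ?thesis unfolding e_def by linarith
qed

theorem theorem8p3:
  fixes F :: "'a::{real_inner,complete_space} \<Rightarrow> ('a \<Rightarrow>\<^sub>L real)"
    and LF :: "'a \<Rightarrow> ('a \<Rightarrow>\<^sub>L ('a \<Rightarrow>\<^sub>L real))"
    and J :: "'a \<Rightarrow> real"
    and DJ :: "'a \<Rightarrow> ('a \<Rightarrow>\<^sub>L real)"
    and U :: "'a set"
    and uh u zh :: 'a
    and \<rho> r \<alpha> L\<rho> MJ :: real
  assumes U_open: "open U"
    and F_deriv: "\<And>w. w \<in> U \<Longrightarrow> (F has_derivative blinfun_apply (LF w)) (at w)"
    and uh_in: "uh \<in> U"
    and rho_pos: "\<rho> > 0"
    and ball_sub: "cball uh \<rho> \<subseteq> U"
    and resid: "norm (F uh) \<le> r"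
    and B_sym: "\<And>x y. LF uh x y = LF uh y x"
    and alpha_pos: "\<alpha> > 0"
    and B_coerc: "\<And>v. LF uh v v \<ge> \<alpha> * (norm v)\<^sup>2"
    and LF_lip: "\<And>w z. w \<in> cball uh \<rho> \<Longrightarrow> z \<in> cball uh \<rho> \<Longrightarrow>
                   norm (LF w - LF z) \<le> L\<rho> * norm (w - z)"
    and u_in: "u \<in> cball uh \<rho>"
    and u_sol: "F u = 0"
    and J_deriv: "\<And>w. w \<in> U \<Longrightarrow> (J has_derivative blinfun_apply (DJ w)) (at w)"
    and DJ_lip: "\<And>w z. w \<in> cball uh \<rho> \<Longrightarrow> z \<in> cball uh \<rho> \<Longrightarrow>
                   norm (DJ w - DJ z) \<le> MJ * norm (w - z)"
    and MJ_nonneg: "MJ \<ge> 0"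
  shows "J u \<in> {J uh - E_J F LF DJ uh zh \<rho> r \<alpha> L\<rho> MJ ..
                 J uh + E_J F LF DJ uh zh \<rho> r \<alpha> L\<rho> MJ}"
proof -
  let ?G = "G_fun LF DJ uh zh"
  define e where "e = u - uh"
  have ne: "norm e \<le> \<rho>" using u_in by (simp add: e_def dist_norm norm_minus_commute)
  have blG: "bounded_linear ?G" unfolding G_fun_def
    by (intro bounded_linear_sub blinfun.bounded_linear_right
          bounded_linear_compose[OF blinfun.bounded_linear_left[of zh]]
          blinfun.bounded_linear_right)
  have onG: "onorm ?G \<ge> 0" using onorm_pos_le[OF blG] .
  have r0: "r \<ge> 0" using resid norm_ge_zero order_trans by blast
  show ?thesis
  proof (cases "\<forall>x::'a. x = 0")
    case True
    then have "u = uh" "zh = 0" by (metis right_minus_eq)+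
    have "\<forall>v. ?G v = 0"
    proof
      fix v :: 'a have "v = 0" using True by blast
      then show "?G v = 0" using linear_0[OF bounded_linear.linear[OF blG]] by simp
    qed
    then have "onorm ?G = 0" using blG by (simp add: onorm_eq_0)
    then have "E_J F LF DJ uh zh \<rho> r \<alpha> L\<rho> MJ \<ge> 0"
      unfolding E_J_def using \<open>zh = 0\<close> MJ_nonneg by simp
    then show ?thesis using \<open>u = uh\<close> by simp
  next
    case False
    then obtain x :: 'a where x: "x \<noteq> 0" by auto
    define z where "z = uh + (\<rho> / norm x) *\<^sub>R x"
    have "z \<in> cball uh \<rho>" using rho_pos x by (simp add: z_def dist_norm)
    from LF_lip[OF _ this, of uh] have "0 \<le> L\<rho> * \<rho>"
      using rho_pos x by (simp add: z_def) (meson norm_ge_zero order_trans)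
    then have L0: "L\<rho> \<ge> 0" using rho_pos by (simp add: zero_le_mult_iff)
    have e2: "(norm e)\<^sup>2 \<le> \<rho>\<^sup>2" using ne by (simp add: power_mono)
    have RJ: "\<bar>J u - J uh - DJ uh e\<bar> \<le> MJ / 2 * (norm e)\<^sup>2"
      unfolding e_def
    proof (rule taylor_scalar[where D="\<lambda>w h. DJ w h" and \<rho>=\<rho>])
      show "(J has_derivative blinfun_apply (DJ w)) (at w)" if "w \<in> cball uh \<rho>" for w
        using J_deriv ball_sub that by blast
      show "\<bar>DJ w h - DJ uh h\<bar> \<le> MJ * norm (w - uh) * norm h" if "w \<in> cball uh \<rho>" for w h
      proof -
        have "\<bar>DJ w h - DJ uh h\<bar> = norm ((DJ w - DJ uh) h)" by (simp add: blinfun.diff_left)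
        also have "\<dots> \<le> norm (DJ w - DJ uh) * norm h" by (rule norm_blinfun)
        also have "\<dots> \<le> MJ * norm (w - uh) * norm h"
          using DJ_lip[OF that, of uh] rho_pos by (simp add: mult_right_mono)
        finally show ?thesis .
      qed
    qed (use u_in in auto)
    have RF: "\<bar>F uh v + LF uh e v\<bar> \<le> L\<rho> * norm v / 2 * (norm e)\<^sup>2" for v
    proof -
      have "\<bar>F u v - F uh v - LF uh (u - uh) v\<bar> \<le> L\<rho> * norm v / 2 * (norm (u - uh))\<^sup>2"
      proof (rule taylor_scalar[where D="\<lambda>w h. LF w h v" and \<rho>=\<rho>])
        show "((\<lambda>w. F w v) has_derivative (\<lambda>h. LF w h v)) (at w)" if "w \<in> cball uh \<rho>" for w
          using bounded_linear.has_derivative[OF blinfun.bounded_linear_left[of v]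
              F_deriv[of w]] ball_sub that by blast
        show "\<bar>LF w h v - LF uh h v\<bar> \<le> L\<rho> * norm v * norm (w - uh) * norm h"
          if "w \<in> cball uh \<rho>" for w h
        proof -
          have "\<bar>LF w h v - LF uh h v\<bar> = norm ((LF w - LF uh) h v)"
            by (simp add: blinfun.diff_left)
          also have "\<dots> \<le> norm ((LF w - LF uh) h) * norm v" by (rule norm_blinfun)
          also have "\<dots> \<le> norm (LF w - LF uh) * norm h * norm v"
            by (intro mult_right_mono norm_blinfun) auto
          also have "\<dots> \<le> L\<rho> * norm (w - uh) * norm h * norm v"
            using LF_lip[OF that, of uh] rho_pos by (simp add: mult_right_mono)
          finally show ?thesis by (simp add: ac_simps)
        qed
      qed (use u_in in auto)
      moreover have "\<bar>F uh v + LF uh e v\<bar> = \<bar>F u v - F uh v - LF uh (u - uh) v\<bar>"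
        using u_sol by (simp add: e_def)
      ultimately show ?thesis by (simp add: e_def)
    qed
    have ebound: "\<alpha> * norm e \<le> r + 1/2 * L\<rho> * \<rho>\<^sup>2"
    proof (cases "e = 0")
      case True then show ?thesis using r0 L0 by simp
    next
      case False
      have "\<alpha> * (norm e)\<^sup>2 \<le> LF uh e e" by (rule B_coerc)
      also have "\<dots> \<le> \<bar>F uh e\<bar> + \<bar>F uh e + LF uh e e\<bar>" by linarith
      also have "\<dots> \<le> r * norm e + L\<rho> * norm e / 2 * \<rho>\<^sup>2"
      proof (rule add_mono)
        have "\<bar>F uh e\<bar> \<le> norm (F uh) * norm e" using norm_blinfun[of "F uh" e] by simp
        also have "\<dots> \<le> r * norm e" using resid by (simp add: mult_right_mono)
        finally show "\<bar>F uh e\<bar> \<le> r * norm e" .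
        show "\<bar>F uh e + LF uh e e\<bar> \<le> L\<rho> * norm e / 2 * \<rho>\<^sup>2"
          using RF[of e] mult_left_mono[OF e2, of "L\<rho> * norm e / 2"] L0 by simp
      qed
      also have "\<dots> = (r + 1/2 * L\<rho> * \<rho>\<^sup>2) * norm e" by (simp add: algebra_simps)
      finally have "(\<alpha> * norm e) * norm e \<le> (r + 1/2 * L\<rho> * \<rho>\<^sup>2) * norm e"
        by (simp add: power2_eq_square ac_simps)
      then show ?thesis using False by simp
    qed
    have Ge: "\<bar>?G e\<bar> \<le> onorm ?G * norm e" using onorm[OF blG, of e] by simp
    also have "\<dots> \<le> onorm ?G * ((r + 1/2 * L\<rho> * \<rho>\<^sup>2) * inverse \<alpha>)"
      using ebound alpha_pos onG by (intro mult_left_mono) (auto simp: field_simps)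
    finally have Ge': "\<bar>?G e\<bar> \<le> (r + 1/2 * L\<rho> * \<rho>\<^sup>2) * inverse \<alpha> * onorm ?G"
      by (simp add: ac_simps)
    have RFz: "\<bar>F uh zh + LF uh e zh\<bar> \<le> 1/2 * L\<rho> * \<rho>\<^sup>2 * norm zh"
      using RF[of zh] mult_left_mono[OF e2, of "L\<rho> * norm zh / 2"] L0 by (simp add: ac_simps)
    have RJ': "\<bar>J u - J uh - DJ uh e\<bar> \<le> 1/2 * MJ * \<rho>\<^sup>2"
      using RJ mult_left_mono[OF e2, of "MJ / 2"] MJ_nonneg by (simp add: ac_simps)
    have dec: "J u - J uh = ?G e - F uh zh + (F uh zh + LF uh e zh) + (J u - J uh - DJ uh e)"
      by (simp add: G_fun_def)
    have "\<bar>J u - J uh\<bar> \<le> E_J F LF DJ uh zh \<rho> r \<alpha> L\<rho> MJ"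
      unfolding E_J_def using dec Ge' RFz RJ' by linarith
    then show ?thesis by (simp add: abs_le_iff)
  qed
qed

end
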